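(* Let $w\in\mathbb R^n_{\ge0}$, let $\mathcal M$ be a loopless matroid with ground set of size at most $n$, let $\rho=\rho_{\mathcal M}$, let $\alpha,\beta\in\mathbb R_{\ge1}$, and let $\tilde\rho$ be an $(\alpha,\beta)$-approximation of $\rho$. Then $F(\rho)\le 2\alpha\beta\,F(\tilde\rho)+\alpha\,w_{\max}$, where $w_{\max}=\max_i w_i$.
   Context: For a matroid $\mathcal M=(N,\mathcal I)$ with rank function $r$, $\mathrm{rank}(\mathcal M)=r(N)$; for $S\subseteq N$, $\lambda\ge0$, $D_{\mathcal M}(S,\lambda)$ is the unique inclusion-wise maximal maximizer of $|U|-\lambda r(U)$ over $U\subseteq S$. Rank-density curve: $\rho_{\mathcal M}(t)=\max\{\lambda\ge0:r(D_{\mathcal M}(N,\lambda))\ge t\}$ for $0<t\le\mathrm{rank}(\mathcal M)$, and $0$ for $t>\mathrm{rank}(\mathcal M)$. For $a\in[0,n]$, $\eta(a)=\mathbb E[\max_{i\in R}w_i]$ with $R$ a uniformly random subset of $\{1,\dots,n\}$ of size $\lfloor a\rfloor$, and $\eta(a)=0$ for $a<1$. For $\rho:\mathbb R_{>0}\to[0,n]$, $F(\rho)=\int_0^\infty\eta(\rho(t))dt$. Downshift: for a non-increasing $\rho:\mathbb R_{>0}\to\mathbb R_{\ge0}$ and $\alpha,\beta\ge1$, let $\phi(t)=\rho(\alpha)/\beta$ for $t\in(0,1]$ and $\phi(t)=\rho(\alpha t)/\beta$ for $t>1$; the $(\alpha,\beta)$-downshift $\rho'$ of $\rho$ is $\rho'(t)=1$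 if $\phi(t)\in(0,1)$ and $\rho'(t)=\phi(t)$ otherwise. A function $\tilde\rho:\mathbb R_{>0}\to\mathbb R_{\ge0}$ is an $(\alpha,\beta)$-approximation of $\rho$ if it is non-increasing and $\rho'\le\tilde\rho\le\rho$ pointwise. *)

theory Defs
  imports "HOL-Probability.Probability"
begin

definition matroid :: "'a set \<Rightarrow> ('a set \<Rightarrow> bool) \<Rightarrow> bool" where
  "matroid N indep \<longleftrightarrow>
     finite N \<and>
     (\<forall>I. indep I \<longrightarrow> I \<subseteq> N) \<and>
     indep {} \<and>
     (\<forall>I J. indep J \<and> I \<subseteq> J \<longrightarrow> indep I) \<and>
     (\<forall>I J. indep I \<and> indep J \<and> card I < card J \<longrightarrow> (\<exists>e\<in>J - I. indep (insert e I)))"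

definition loopless :: "'a set \<Rightarrow> ('a set \<Rightarrow> bool) \<Rightarrow> bool" where
  "loopless N indep \<longleftrightarrow> (\<forall>e\<in>N. indep {e})"

definition mrank :: "('a set \<Rightarrow> bool) \<Rightarrow> 'a set \<Rightarrow> nat" where
  "mrank indep U = Max {card I | I. I \<subseteq> U \<and> indep I}"

definition matroid_rank :: "'a set \<Rightarrow> ('a set \<Rightarrow> bool) \<Rightarrow> nat" where
  "matroid_rank N indep = mrank indep N"

definition dens_obj :: "('a set \<Rightarrow> bool) \<Rightarrow> real \<Rightarrow> 'a set \<Rightarrow> real" where
  "dens_obj indep lam U = real (card U) - lam * real (mrank indep U)"

definition is_dens_maximizer :: "('a set \<Rightarrow> bool) \<Rightarrow> 'a set \<Rightarrow> real \<Rightarrow> 'a set \<Rightarrow> bool" where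
  "is_dens_maximizer indep S lam U \<longleftrightarrow>
     U \<subseteq> S \<and> (\<forall>V. V \<subseteq> S \<longrightarrow> dens_obj indep lam V \<le> dens_obj indep lam U)"

definition Dset :: "('a set \<Rightarrow> bool) \<Rightarrow> 'a set \<Rightarrow> real \<Rightarrow> 'a set" where
  "Dset indep S lam = (THE U. is_dens_maximizer indep S lam U \<and>
      (\<forall>V. is_dens_maximizer indep S lam V \<and> U \<subseteq> V \<longrightarrow> V = U))"

text \<open>Rank-density curve (values for t \<le> 0 are irrelevant).\<close>
definition rank_density :: "'a set \<Rightarrow> ('a set \<Rightarrow> bool) \<Rightarrow> real \<Rightarrow> real" where
  "rank_density N indep t =
     (if 0 < t \<and> t \<le> real (matroid_rank N indep)
      then (GREATEST lam. lam \<ge> 0 \<and> real (mrank indep (Dset indep N lam)) \<ge> t)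
      else 0)"

definition eta :: "nat \<Rightarrow> (nat \<Rightarrow> real) \<Rightarrow> real \<Rightarrow> real" where
  "eta n w a =
     (if a < 1 then 0
      else measure_pmf.expectation
             (pmf_of_set {R. R \<subseteq> {1..n} \<and> card R = nat \<lfloor>a\<rfloor>})
             (\<lambda>R. Max (w ` R)))"

definition Ffun :: "nat \<Rightarrow> (nat \<Rightarrow> real) \<Rightarrow> (real \<Rightarrow> real) \<Rightarrow> ennreal" where
  "Ffun n w rho = (\<integral>\<^sup>+ t\<in>{0<..}. ennreal (eta n w (rho t)) \<partial>lborel)"

definition downshift_phi :: "real \<Rightarrow> real \<Rightarrow> (real \<Rightarrow> real) \<Rightarrow> real \<Rightarrow> real" where
  "downshift_phi \<alpha> \<beta> rho t = (if t \<le> 1 then rho \<alpha> / \<beta> else rho (\<alpha> * t) / \<beta>)"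

definition downshift :: "real \<Rightarrow> real \<Rightarrow> (real \<Rightarrow> real) \<Rightarrow> real \<Rightarrow> real" where
  "downshift \<alpha> \<beta> rho t =
     (let p = downshift_phi \<alpha> \<beta> rho t in if 0 < p \<and> p < 1 then 1 else p)"

definition is_approx :: "real \<Rightarrow> real \<Rightarrow> (real \<Rightarrow> real) \<Rightarrow> (real \<Rightarrow> real) \<Rightarrow> bool" where
  "is_approx \<alpha> \<beta> rho rho' \<longleftrightarrow>
     (\<forall>t. 0 < t \<longrightarrow> rho' t \<ge> 0) \<and>
     (\<forall>s t. 0 < s \<and> s \<le> t \<longrightarrow> rho' t \<le> rho' s) \<and>
     (\<forall>t. 0 < t \<longrightarrow> downshift \<alpha> \<beta> rho t \<le> rho' t \<and> rho' t \<le> rho t)"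

end

theory Submission imports Defs begin


definition ksub :: "nat \<Rightarrow> nat \<Rightarrow> nat set set" where
  "ksub n k = {R. R \<subseteq> {1..n} \<and> card R = k}"

lemma ksub_finite: "finite (ksub n k)"
  unfolding ksub_def by (rule finite_subset[of _ "Pow {1..n}"]) auto

lemma ksub_card_pos: "k \<le> n \<Longrightarrow> card (ksub n k) > 0"
  unfolding ksub_def using n_subsets[of "{1..n}" k] by simp

lemma ksub_ne: "k \<le> n \<Longrightarrow> ksub n k \<noteq> {}"
  using ksub_card_pos by fastforce

lemma dc:
  fixes g :: "nat set \<Rightarrow> real"
  assumes "k < n"
  shows "(\<Sum>R\<in>ksub n (Suc k). \<Sum>x\<in>R. g (R - {x})) = real (n - k) * (\<Sum>P\<in>ksub n k. g P)"
proof -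
  have fin: "\<And>R. R \<in> ksub n j \<Longrightarrow> finite R" for j
    unfolding ksub_def by (auto intro: finite_subset)
  have "(\<Sum>R\<in>ksub n (Suc k). \<Sum>x\<in>R. g (R - {x})) = (\<Sum>(R,x)\<in>Sigma (ksub n (Suc k)) (\<lambda>R. R). g (R - {x}))"
    by (rule sum.Sigma) (auto simp: ksub_finite fin)
  also have "\<dots> = (\<Sum>(P,x)\<in>Sigma (ksub n k) (\<lambda>P. {1..n} - P). g P)"
  proof (rule sum.reindex_bij_witness[where i="\<lambda>(P,x). (insert x P, x)" and j="\<lambda>(R,x). (R - {x}, x)"])
    fix a assume "a \<in> Sigma (ksub n k) (\<lambda>P. {1..n} - P)"
    then obtain P x where a: "a = (P,x)" "P \<in> ksub n k" "x \<in> {1..n} - P" by auto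
    then have "finite P" using fin by blast
    then show "(\<lambda>(R,x). (R - {x}, x)) ((\<lambda>(P,x). (insert x P, x)) a) = a"
      "(\<lambda>(P,x). (insert x P, x)) a \<in> Sigma (ksub n (Suc k)) (\<lambda>R. R)"
      using a by (auto simp: ksub_def)
  next
    fix b assume "b \<in> Sigma (ksub n (Suc k)) (\<lambda>R. R)"
    then obtain R x where b: "b = (R,x)" "R \<in> ksub n (Suc k)" "x \<in> R" by auto
    then have "finite R" using fin by blast
    then show "(\<lambda>(P,x). (insert x P, x)) ((\<lambda>(R,x). (R - {x}, x)) b) = b"
      "(\<lambda>(R,x). (R - {x}, x)) b \<in> Sigma (ksub n k) (\<lambda>P. {1..n} - P)"
      using b by (auto simp: ksub_def insert_absorb)
    show "(case (\<lambda>(R,x). (R - {x}, x)) b of (P, x) \<Rightarrow> g P) = (case b of (R, x) \<Rightarrow> g (R - {x}))"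
      using b by simp
  qed
  also have "\<dots> = (\<Sum>P\<in>ksub n k. \<Sum>x\<in>{1..n} - P. g P)"
    by (rule sum.Sigma[symmetric]) (auto simp: ksub_finite)
  also have "\<dots> = (\<Sum>P\<in>ksub n k. real (n - k) * g P)"
  proof (rule sum.cong)
    fix P assume "P \<in> ksub n k"
    then have "P \<subseteq> {1..n}" "card P = k" unfolding ksub_def by auto
    then have "card ({1..n} - P) = n - k"
      using card_Diff_subset[of P "{1..n}"] finite_subset[of P "{1..n}"] by simp
    then show "(\<Sum>x\<in>{1..n} - P. g P) = real (n - k) * g P" by simp
  qed simp
  finally show ?thesis by (simp add: sum_distrib_left)
qed

definition Tk :: "nat \<Rightarrow> (nat \<Rightarrow> real) \<Rightarrow> nat \<Rightarrow> real" where
  "Tk n w k = (\<Sum>R\<in>ksub n k. Max (w ` R))"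

lemma ksub_mem: "R \<in> ksub n k \<Longrightarrow> R \<subseteq> {1..n} \<and> card R = k \<and> finite R"
  unfolding ksub_def by (auto intro: finite_subset)

lemma pt_upper:
  assumes "R \<in> ksub n (Suc k)" "k \<ge> 1"
  shows "(\<Sum>x\<in>R. Max (w ` (R - {x}))) \<le> real (Suc k) * Max (w ` R)"
proof -
  from ksub_mem[OF assms(1)] have R: "R \<subseteq> {1..n}" "card R = Suc k" "finite R" by auto
  have "(\<Sum>x\<in>R. Max (w ` (R - {x}))) \<le> (\<Sum>x\<in>R. Max (w ` R))"
  proof (rule sum_mono)
    fix x assume "x \<in> R"
    have "R - {x} \<noteq> {}" using R assms(2) \<open>x \<in> R\<close>
      by (metis card_Diff_singleton card.empty diff_Suc_1 not_one_le_zero)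
    then show "Max (w ` (R - {x})) \<le> Max (w ` R)"
      using R by (intro Max_mono) auto
  qed
  then show ?thesis using R by simp
qed

lemma pt_lower:
  assumes "R \<in> ksub n (Suc k)" "k \<ge> 1" "\<forall>i\<in>{1..n}. w i \<ge> 0"
  shows "real k * Max (w ` R) \<le> (\<Sum>x\<in>R. Max (w ` (R - {x})))"
proof -
  from ksub_mem[OF assms(1)] have R: "R \<subseteq> {1..n}" "card R = Suc k" "finite R" by auto
  have "R \<noteq> {}" using R by auto
  then have "Max (w ` R) \<in> w ` R" using R by (intro Max_in) auto
  then obtain y where y: "y \<in> R" "w y = Max (w ` R)" by (metis imageE)
  have ne: "R - {x} \<noteq> {}" if "x \<in> R" for x using R assms(2) that
      by (metis card_Diff_singleton card.empty diff_Suc_1 not_one_le_zero)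
  have "(\<Sum>x\<in>R. Max (w ` (R - {x}))) = Max (w ` (R - {y})) + (\<Sum>x\<in>R - {y}. Max (w ` (R - {x})))"
    using R y by (simp add: sum.remove)
  also have "\<dots> \<ge> 0 + (\<Sum>x\<in>R - {y}. w y)"
  proof (rule add_mono)
    obtain z where "z \<in> R - {y}" using ne[OF y(1)] by auto
    then have "w z \<le> Max (w ` (R - {y}))" using R by (intro Max_ge) auto
    moreover have "w z \<ge> 0" using \<open>z \<in> R - {y}\<close> R assms(3) by auto
    ultimately show "0 \<le> Max (w ` (R - {y}))" by linarith
    show "(\<Sum>x\<in>R - {y}. w y) \<le> (\<Sum>x\<in>R - {y}. Max (w ` (R - {x})))"
    proof (rule sum_mono)
      fix x assume "x \<in> R - {y}"
      then have "y \<in> R - {x}" using y by auto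
      then show "w y \<le> Max (w ` (R - {x}))" using R by (intro Max_ge) auto
    qed
  qed
  finally show ?thesis using R y by simp
qed

lemma c_rel: assumes "k < n"
  shows "real (Suc k) * card (ksub n (Suc k)) = real (n - k) * card (ksub n k)"
proof -
  have "(\<Sum>R\<in>ksub n (Suc k). \<Sum>x\<in>R. (1::real)) = real (n - k) * (\<Sum>P\<in>ksub n k. 1)"
    using dc[OF assms, of "\<lambda>_. 1"] by simp
  moreover have "(\<Sum>R\<in>ksub n (Suc k). \<Sum>x\<in>R. (1::real)) = (\<Sum>R\<in>ksub n (Suc k). real (Suc k))"
    by (rule sum.cong) (auto dest: ksub_mem)
  ultimately show ?thesis by simp
qed

lemma T_upper: assumes "k < n" "k \<ge> 1"
  shows "real (n - k) * Tk n w k \<le> real (Suc k) * Tk n w (Suc k)"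
proof -
  have "real (n - k) * Tk n w k = (\<Sum>R\<in>ksub n (Suc k). \<Sum>x\<in>R. Max (w ` (R - {x})))"
    unfolding Tk_def using dc[OF assms(1), of "\<lambda>R. Max (w ` R)"] by simp
  also have "\<dots> \<le> (\<Sum>R\<in>ksub n (Suc k). real (Suc k) * Max (w ` R))"
    by (rule sum_mono, rule pt_upper) (use assms in auto)
  finally show ?thesis unfolding Tk_def by (simp add: sum_distrib_left)
qed

lemma T_lower: assumes "k < n" "k \<ge> 1" "\<forall>i\<in>{1..n}. w i \<ge> 0"
  shows "real k * Tk n w (Suc k) \<le> real (n - k) * Tk n w k"
proof -
  have "real (n - k) * Tk n w k = (\<Sum>R\<in>ksub n (Suc k). \<Sum>x\<in>R. Max (w ` (R - {x})))"
    unfolding Tk_def using dc[OF assms(1), of "\<lambda>R. Max (w ` R)"] by simp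
  also have "\<dots> \<ge> (\<Sum>R\<in>ksub n (Suc k). real k * Max (w ` R))"
    by (rule sum_mono, rule pt_lower) (use assms in auto)
  finally show ?thesis unfolding Tk_def by (simp add: sum_distrib_left)
qed

lemma eta_nat: assumes "k \<ge> 1" "k \<le> n"
  shows "eta n w (real k) = Tk n w k / card (ksub n k)"
proof -
  have "eta n w (real k) = measure_pmf.expectation (pmf_of_set (ksub n k)) (\<lambda>R. Max (w ` R))"
    unfolding eta_def ksub_def using assms by simp
  also have "\<dots> = Tk n w k / card (ksub n k)"
    unfolding Tk_def by (rule integral_pmf_of_set) (use ksub_ne ksub_finite assms in auto)
  finally show ?thesis .
qed

lemma eta_step: assumes "k < n" "k \<ge> 1" "\<forall>i\<in>{1..n}. w i \<ge> 0"
  shows "eta n w (real k) \<le> eta n w (real (Suc k))"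
    and "real k * eta n w (real (Suc k)) \<le> real (Suc k) * eta n w (real k)"
proof -
  define c0 where "c0 = real (card (ksub n k))"
  define c1 where "c1 = real (card (ksub n (Suc k)))"
  define T0 where "T0 = Tk n w k"
  define T1 where "T1 = Tk n w (Suc k)"
  have c0: "c0 > 0" unfolding c0_def using ksub_card_pos assms by simp
  have c1: "c1 > 0" unfolding c1_def using ksub_card_pos assms by simp
  have cr: "real (Suc k) * c1 = real (n - k) * c0" unfolding c0_def c1_def using c_rel[OF assms(1)] by simp
  have tu: "real (n - k) * T0 \<le> real (Suc k) * T1" unfolding T0_def T1_def using T_upper assms by simp
  have tl: "real k * T1 \<le> real (n - k) * T0" unfolding T0_def T1_def using T_lower assms by simp
  have e0: "eta n w (real k) = T0 / c0" unfolding T0_def c0_def using eta_nat assms by simp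
  have e1: "eta n w (real (Suc k)) = T1 / c1" unfolding T1_def c1_def using eta_nat[of "Suc k"] assms by simp
  have "T0 * c1 \<le> T1 * c0"
  proof -
    have "real (Suc k) * (T0 * c1) = T0 * (real (n - k) * c0)" using cr by (metis mult.left_commute)
    also have "\<dots> \<le> real (Suc k) * T1 * c0" using mult_right_mono[OF tu, of c0] c0 by (simp add: algebra_simps)
    finally have "real (Suc k) * (T0 * c1) \<le> real (Suc k) * (T1 * c0)" by (simp add: mult.assoc)
    then show ?thesis by (rule mult_left_le_imp_le) simp
  qed
  then have "T0 * c1 / (c0 * c1) \<le> T1 * c0 / (c0 * c1)"
    using c0 c1 by (intro divide_right_mono) auto
  then show "eta n w (real k) \<le> eta n w (real (Suc k))" using c0 c1 e0 e1
    by simp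
  have "real k * T1 * c0 \<le> real (Suc k) * T0 * c1"
  proof -
    have "real k * T1 * c0 \<le> real (n - k) * T0 * c0" using tl c0 by (simp add: mult_right_mono)
    also have "\<dots> = T0 * (real (n - k) * c0)" by (simp add: algebra_simps)
    also have "\<dots> = T0 * (real (Suc k) * c1)" using cr by simp
    also have "\<dots> = real (Suc k) * T0 * c1" by (simp add: algebra_simps)
    finally show ?thesis .
  qed
  then have "real k * T1 * c0 / (c0 * c1) \<le> real (Suc k) * T0 * c1 / (c0 * c1)"
    using c0 c1 by (intro divide_right_mono) auto
  then show "real k * eta n w (real (Suc k)) \<le> real (Suc k) * eta n w (real k)" using c0 c1 e0 e1
    by simp
qed

lemma eta_floor: "a \<ge> 1 \<Longrightarrow> eta n w a = eta n w (real (nat \<lfloor>a\<rfloor>))"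
proof -
  assume a: "a \<ge> 1"
  then have "(1::int) \<le> \<lfloor>a\<rfloor>" by (simp add: le_floor_iff)
  then have "real (nat \<lfloor>a\<rfloor>) \<ge> 1" by simp
  then show ?thesis using a unfolding eta_def by simp
qed

lemma eta_nat_bounds: assumes "k \<ge> 1" "k \<le> n" "\<forall>i\<in>{1..n}. w i \<ge> 0"
  shows "0 \<le> eta n w (real k)" "eta n w (real k) \<le> Max (w ` {1..n})"
proof -
  have c: "real (card (ksub n k)) > 0" using ksub_card_pos assms by simp
  have b: "0 \<le> Max (w ` R) \<and> Max (w ` R) \<le> Max (w ` {1..n})" if "R \<in> ksub n k" for R
  proof -
    from ksub_mem[OF that] have R: "R \<subseteq> {1..n}" "card R = k" "finite R" by auto
    then obtain x where "x \<in> R" using assms(1) by fastforce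
    then have "w x \<le> Max (w ` R)" using R by (intro Max_ge) auto
    moreover have "w x \<ge> 0" using \<open>x \<in> R\<close> R assms(3) by auto
    moreover have "Max (w ` R) \<le> Max (w ` {1..n})" using R \<open>x \<in> R\<close> by (intro Max_mono) auto
    ultimately show ?thesis by linarith
  qed
  have "0 \<le> Tk n w k" unfolding Tk_def using b by (intro sum_nonneg) auto
  then show "0 \<le> eta n w (real k)" using eta_nat[OF assms(1,2)] c by simp
  have "Tk n w k \<le> real (card (ksub n k)) * Max (w ` {1..n})"
    unfolding Tk_def using b by (intro sum_bounded_above) auto
  then show "eta n w (real k) \<le> Max (w ` {1..n})" using eta_nat[OF assms(1,2)] c
    by (simp add: divide_le_eq mult.commute)
qed

lemma eta_mono_nat: assumes "1 \<le> m" "m \<le> k" "k \<le> n" "\<forall>i\<in>{1..n}. w i \<ge> 0"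
  shows "eta n w (real m) \<le> eta n w (real k)"
  using assms(2,3)
proof (induction k rule: dec_induct)
  case base then show ?case by simp
next
  case (step k)
  then have "eta n w (real k) \<le> eta n w (real (Suc k))" using eta_step(1)[of k n w] assms by simp
  with step show ?case by simp
qed

lemma eta_ratio: assumes "1 \<le> m" "m \<le> k" "k \<le> n" "\<forall>i\<in>{1..n}. w i \<ge> 0"
  shows "real m * eta n w (real k) \<le> real k * eta n w (real m)"
  using assms(2,3)
proof (induction k rule: dec_induct)
  case base then show ?case by simp
next
  case (step k)
  have k1: "k \<ge> 1" "k < n" using step assms by auto
  have st: "real k * eta n w (real (Suc k)) \<le> real (Suc k) * eta n w (real k)"
    using eta_step(2)[of k n w] k1 assms by simp
  have ih: "real m * eta n w (real k) \<le> real k * eta n w (real m)" using step by simp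
  have "real k * (real m * eta n w (real (Suc k))) = real m * (real k * eta n w (real (Suc k)))"
    by (simp add: algebra_simps)
  also have "\<dots> \<le> real m * (real (Suc k) * eta n w (real k))"
    using st by (intro mult_left_mono) auto
  also have "\<dots> = real (Suc k) * (real m * eta n w (real k))" by (simp add: algebra_simps)
  also have "\<dots> \<le> real (Suc k) * (real k * eta n w (real m))"
    using ih by (intro mult_left_mono) auto
  also have "\<dots> = real k * (real (Suc k) * eta n w (real m))" by (simp add: algebra_simps)
  finally have "real k * (real m * eta n w (real (Suc k))) \<le> real k * (real (Suc k) * eta n w (real m))" .
  then show ?case using k1 by (simp add: mult_le_cancel_left_pos)
qed

lemma eta_bounds: assumes "0 \<le> a" "a \<le> real n" "\<forall>i\<in>{1..n}. w i \<ge> 0" "n \<ge> 1"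
  shows "0 \<le> eta n w a" "eta n w a \<le> Max (w ` {1..n})"
proof -
  have W: "0 \<le> Max (w ` {1..n})"
  proof -
    have "w 1 \<le> Max (w ` {1..n})" using assms(4) by (intro Max_ge) auto
    moreover have "0 \<le> w 1" using assms(3,4) by simp
    ultimately show ?thesis by linarith
  qed
  have "0 \<le> eta n w a \<and> eta n w a \<le> Max (w ` {1..n})"
  proof (cases "a < 1")
    case True then show ?thesis using W unfolding eta_def by simp
  next
    case False
    then have k: "1 \<le> nat \<lfloor>a\<rfloor>" "nat \<lfloor>a\<rfloor> \<le> n" using assms by (simp_all add: le_nat_iff le_floor_iff nat_le_iff floor_le_iff)
    show ?thesis using eta_floor[of a n w] False eta_nat_bounds[OF k assms(3)] by simp
  qed
  then show "0 \<le> eta n w a" "eta n w a \<le> Max (w ` {1..n})" by auto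
qed

lemma eta_mono: assumes "0 \<le> a" "a \<le> b" "b \<le> real n" "\<forall>i\<in>{1..n}. w i \<ge> 0" "n \<ge> 1"
  shows "eta n w a \<le> eta n w b"
proof (cases "a < 1")
  case True then show ?thesis using eta_bounds[of b n w] assms unfolding eta_def by auto
next
  case False
  then have k: "1 \<le> nat \<lfloor>a\<rfloor>" "nat \<lfloor>a\<rfloor> \<le> nat \<lfloor>b\<rfloor>" "nat \<lfloor>b\<rfloor> \<le> n"
    using assms by (simp_all add: le_nat_iff le_floor_iff floor_mono nat_mono nat_le_iff floor_le_iff)
      (meson of_int_floor_le order_trans)
  show ?thesis using eta_floor[of a n w] eta_floor[of b n w] False assms eta_mono_nat[OF k assms(4)] by simp
qed

lemma eta_key: assumes "0 \<le> a" "a \<le> real n" "\<forall>i\<in>{1..n}. w i \<ge> 0" "n \<ge> 1" "\<beta> \<ge> 1"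
  shows "eta n w a \<le> 2 * \<beta> * eta n w (if 0 < a / \<beta> \<and> a / \<beta> < 1 then 1 else a / \<beta>)"
proof -
  have "a * 1 \<le> a * \<beta>" using assms by (intro mult_left_mono) auto
  then have adb: "0 \<le> a / \<beta>" "a / \<beta> \<le> a" using assms by (auto simp: divide_le_eq)
  show ?thesis
  proof (cases "a < 1")
    case True
    have "0 \<le> eta n w (if 0 < a / \<beta> \<and> a / \<beta> < 1 then 1 else a / \<beta>)"
      using eta_bounds(1)[of 1 n w] eta_bounds(1)[of "a / \<beta>" n w] adb assms by auto
    then show ?thesis using True assms unfolding eta_def by auto
  next
    case False
    define k where "k = nat \<lfloor>a\<rfloor>"
    have k: "1 \<le> k" "k \<le> n" "real k \<le> a" using False assms unfolding k_def
      by (simp_all add: le_nat_iff le_floor_iff nat_le_iff floor_le_iff)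
    have ea: "eta n w a = eta n w (real k)" unfolding k_def using eta_floor[of a n w] False by linarith
    show ?thesis
    proof (cases "a / \<beta> < 1")
      case True
      then have d: "(if 0 < a / \<beta> \<and> a / \<beta> < 1 then 1 else a / \<beta>) = 1" using False assms by auto
      have "a < \<beta>" using True assms by (simp add: divide_less_eq)
      have r: "real 1 * eta n w (real k) \<le> real k * eta n w (real 1)"
        using eta_ratio[of 1 k n w] k assms by simp
      have e1: "0 \<le> eta n w 1" using eta_nat_bounds(1)[of 1 n w] assms by simp
      have "real k * eta n w 1 \<le> 2 * \<beta> * eta n w 1"
        using k \<open>a < \<beta>\<close> e1 by (intro mult_right_mono) auto
      then show ?thesis using r d ea by simp
    next
      case nt: False
      then have d: "(if 0 < a / \<beta> \<and> a / \<beta> < 1 then 1 else a / \<beta>) = a / \<beta>" by auto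
      define m where "m = nat \<lfloor>a / \<beta>\<rfloor>"
      have f1: "(1::int) \<le> \<lfloor>a / \<beta>\<rfloor>" using nt by (simp add: le_floor_iff)
      have "nat 1 \<le> m" unfolding m_def by (rule nat_mono[OF f1])
      then have m1: "1 \<le> m" by simp
      have m2: "m \<le> k" unfolding m_def k_def by (intro nat_mono floor_mono adb(2))
      have rm: "real m = of_int \<lfloor>a / \<beta>\<rfloor>" unfolding m_def using f1 by simp
      have m3: "a / \<beta> < real m + 1" unfolding rm by (rule real_of_int_floor_add_one_gt)
      note m = m1 m2 m3
      have ed: "eta n w (a / \<beta>) = eta n w (real m)" unfolding m_def using eta_floor[of "a / \<beta>" n w] nt by linarith
      have r: "real m * eta n w (real k) \<le> real k * eta n w (real m)"
        using eta_ratio[of m k n w] k m assms by simp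
      have em: "0 \<le> eta n w (real m)" using eta_nat_bounds(1)[of m n w] m k assms by simp
      have "a < \<beta> * (real m + 1)" using m(3) assms by (simp add: divide_less_eq mult.commute)
      also have "\<dots> \<le> 2 * \<beta> * real m" using m assms by (simp add: algebra_simps)
      finally have "real k \<le> 2 * \<beta> * real m" using k by linarith
      then have "real k * eta n w (real m) \<le> (2 * \<beta> * real m) * eta n w (real m)"
        using em by (intro mult_right_mono) auto
      with r have "real m * eta n w (real k) \<le> real m * (2 * \<beta> * eta n w (real m))"
        by (simp add: algebra_simps)
      then have "eta n w (real k) \<le> 2 * \<beta> * eta n w (real m)" using m by (simp add: mult_le_cancel_left_pos)
      then show ?thesis using d ea ed by simp
    qed
  qed
qed



lemma mat_fin: "matroid N indep \<Longrightarrow> finite N"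
  unfolding matroid_def by simp
lemma mat_empty: "matroid N indep \<Longrightarrow> indep {}"
  unfolding matroid_def by simp
lemma indep_sub: "matroid N indep \<Longrightarrow> indep I \<Longrightarrow> I \<subseteq> N"
proof -
  assume "matroid N indep" "indep I"
  moreover have "\<forall>I. indep I \<longrightarrow> I \<subseteq> N" using \<open>matroid N indep\<close> unfolding matroid_def by simp
  ultimately show ?thesis by simp
qed
lemma indep_fin: "matroid N indep \<Longrightarrow> indep I \<Longrightarrow> finite I"
  using mat_fin indep_sub finite_subset by metis
lemma indep_down: "matroid N indep \<Longrightarrow> indep J \<Longrightarrow> I \<subseteq> J \<Longrightarrow> indep I"
proof -
  assume a: "matroid N indep" "indep J" "I \<subseteq> J"
  have "\<forall>I J. indep J \<and> I \<subseteq> J \<longrightarrow> indep I" using a(1) unfolding matroid_def by simp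
  then show ?thesis using a by blast
qed
lemma augment: "matroid N indep \<Longrightarrow> indep I \<Longrightarrow> indep J \<Longrightarrow> card I < card J \<Longrightarrow> \<exists>e\<in>J - I. indep (insert e I)"
proof -
  assume a: "matroid N indep" "indep I" "indep J" "card I < card J"
  have "\<forall>I J. indep I \<and> indep J \<and> card I < card J \<longrightarrow> (\<exists>e\<in>J - I. indep (insert e I))"
    using a(1) unfolding matroid_def by simp
  then show ?thesis using a by blast
qed

lemma mrank_set: assumes "matroid N indep"
  shows "finite {card I | I. I \<subseteq> U \<and> indep I}" "{card I | I. I \<subseteq> U \<and> indep I} \<noteq> {}"
proof -
  have "{card I | I. I \<subseteq> U \<and> indep I} \<subseteq> card ` Pow N" using indep_sub[OF assms] by blast
  moreover have "finite N" using mat_fin[OF assms] .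
  ultimately show "finite {card I | I. I \<subseteq> U \<and> indep I}" using finite_subset by blast
  have "indep {}" using mat_empty[OF assms] .
  then show "{card I | I. I \<subseteq> U \<and> indep I} \<noteq> {}" by auto
qed

lemma mrank_ge: "matroid N indep \<Longrightarrow> indep I \<Longrightarrow> I \<subseteq> U \<Longrightarrow> card I \<le> mrank indep U"
proof -
  assume a: "matroid N indep" "indep I" "I \<subseteq> U"
  have "card I \<in> {card I | I. I \<subseteq> U \<and> indep I}" using a by blast
  then show ?thesis unfolding mrank_def using mrank_set[OF a(1), of U] by (intro Max_ge)
qed

lemma mrank_obtain: assumes "matroid N indep"
  obtains I where "I \<subseteq> U" "indep I" "card I = mrank indep U"
proof -
  have "mrank indep U \<in> {card I | I. I \<subseteq> U \<and> indep I}"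
    unfolding mrank_def using mrank_set[OF assms] by (intro Max_in)
  then obtain I where I: "mrank indep U = card I" "I \<subseteq> U" "indep I" by blast
  show ?thesis by (rule that[OF I(2,3) I(1)[symmetric]])
qed

lemma mrank_mono: assumes "matroid N indep" "U \<subseteq> V" shows "mrank indep U \<le> mrank indep V"
proof -
  obtain I where "I \<subseteq> U" "indep I" "card I = mrank indep U" using mrank_obtain[OF assms(1)] by blast
  moreover have "I \<subseteq> V" using calculation assms(2) by blast
  ultimately show ?thesis using mrank_ge[OF assms(1), of I V] by simp
qed

lemma mrank_le_N: assumes "matroid N indep" shows "mrank indep U \<le> card N"
proof -
  obtain I where "I \<subseteq> U" "indep I" "card I = mrank indep U" using mrank_obtain[OF assms(1)] by blast
  moreover have "finite N" using mat_fin[OF assms] .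
  ultimately show ?thesis using indep_sub[OF assms] card_mono[of N I] by simp
qed

lemma mrank_empty: assumes "matroid N indep" shows "mrank indep {} = 0"
proof -
  obtain I where "I \<subseteq> {}" "indep I" "card I = mrank indep {}" using mrank_obtain[OF assms(1)] by blast
  then have "I = {}" by blast
  with \<open>card I = mrank indep {}\<close> show ?thesis by simp
qed

lemma extend: assumes "matroid N indep"
  shows "indep I \<Longrightarrow> I \<subseteq> X \<Longrightarrow> \<exists>J. I \<subseteq> J \<and> J \<subseteq> X \<and> indep J \<and> card J = mrank indep X"
proof (induction "mrank indep X - card I" arbitrary: I rule: less_induct)
  case less
  obtain K where K: "K \<subseteq> X" "indep K" "card K = mrank indep X" using mrank_obtain[OF assms] by blast
  have le: "card I \<le> mrank indep X" using mrank_ge[OF assms less.prems(1,2)] .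
  show ?case
  proof (cases "card I = mrank indep X")
    case True then show ?thesis using less.prems by blast
  next
    case False
    then have "card I < card K" using le K by simp
    then obtain e where e: "e \<in> K - I" "indep (insert e I)"
      using augment[OF assms less.prems(1) K(2)] by blast
    have fI: "finite I" using indep_fin[OF assms less.prems(1)] .
    have c: "card (insert e I) = Suc (card I)" using e fI by simp
    have "mrank indep X - card (insert e I) < mrank indep X - card I" using c False le by simp
    moreover have "insert e I \<subseteq> X" using e K less.prems by auto
    ultimately have "\<exists>J. insert e I \<subseteq> J \<and> J \<subseteq> X \<and> indep J \<and> card J = mrank indep X"
      using less.hyps[of "insert e I"] e(2) by simp
    then show ?thesis by blast
  qed
qed

lemma submod: assumes "matroid N indep"
  shows "mrank indep (A \<union> B) + mrank indep (A \<inter> B) \<le> mrank indep A + mrank indep B"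
proof -
  obtain I where I: "I \<subseteq> A \<inter> B" "indep I" "card I = mrank indep (A \<inter> B)" using mrank_obtain[OF assms] by blast
  then obtain J where J: "I \<subseteq> J" "J \<subseteq> A \<union> B" "indep J" "card J = mrank indep (A \<union> B)"
    using extend[OF assms, of I "A \<union> B"] by blast
  have fJ: "finite J" using indep_fin[OF assms J(3)] .
  have "card (J \<inter> A) \<le> mrank indep A" using mrank_ge[OF assms indep_down[OF assms J(3), of "J \<inter> A"], of A] by simp
  moreover have "card (J \<inter> B) \<le> mrank indep B" using mrank_ge[OF assms indep_down[OF assms J(3), of "J \<inter> B"], of B] by simp
  moreover have "card (J \<inter> A) + card (J \<inter> B) = card ((J \<inter> A) \<union> (J \<inter> B)) + card ((J \<inter> A) \<inter> (J \<inter> B))"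
    using fJ by (intro card_Un_Int) simp_all
  moreover have "(J \<inter> A) \<union> (J \<inter> B) = J" using J by auto
  then have "card ((J \<inter> A) \<union> (J \<inter> B)) = card J" by simp
  moreover have "card I \<le> card ((J \<inter> A) \<inter> (J \<inter> B))" using fJ I J by (intro card_mono) (simp, blast)
  ultimately show ?thesis using I J by linarith
qed

lemma maximizer_union:
  assumes "matroid N indep" "lam \<ge> 0" "is_dens_maximizer indep N lam U" "is_dens_maximizer indep N lam V"
  shows "is_dens_maximizer indep N lam (U \<union> V)"
proof -
  have UV: "U \<subseteq> N" "V \<subseteq> N" using assms unfolding is_dens_maximizer_def by auto
  have fN: "finite N" using assms unfolding matroid_def by auto
  have fU: "finite U" "finite V" using UV fN finite_subset by auto
  have cu: "real (card (U \<union> V)) + real (card (U \<inter> V)) = real (card U) + real (card V)"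
    using card_Un_Int[OF fU] by simp
  have sm: "real (mrank indep (U \<union> V)) + real (mrank indep (U \<inter> V)) \<le> real (mrank indep U) + real (mrank indep V)"
    using submod[OF assms(1), of U V] by linarith
  have "lam * (real (mrank indep (U \<union> V)) + real (mrank indep (U \<inter> V))) \<le> lam * (real (mrank indep U) + real (mrank indep V))"
    using sm assms(2) by (intro mult_left_mono) auto
  then have "dens_obj indep lam (U \<union> V) + dens_obj indep lam (U \<inter> V) \<ge> dens_obj indep lam U + dens_obj indep lam V"
    unfolding dens_obj_def using cu by (simp add: algebra_simps)
  moreover have "dens_obj indep lam (U \<inter> V) \<le> dens_obj indep lam V"
  proof -
    have "U \<inter> V \<subseteq> N" using UV by blast
    then show ?thesis using assms(4) unfolding is_dens_maximizer_def by blast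
  qed
  ultimately have ge: "dens_obj indep lam (U \<union> V) \<ge> dens_obj indep lam U" by linarith
  show ?thesis unfolding is_dens_maximizer_def
  proof (intro conjI allI impI)
    show "U \<union> V \<subseteq> N" using UV by auto
    fix W assume "W \<subseteq> N"
    then have "dens_obj indep lam W \<le> dens_obj indep lam U" using assms(3) unfolding is_dens_maximizer_def by auto
    then show "dens_obj indep lam W \<le> dens_obj indep lam (U \<union> V)" using ge by linarith
  qed
qed

lemma Dset_char:
  assumes "matroid N indep" "lam \<ge> 0"
  shows "is_dens_maximizer indep N lam (Dset indep N lam)"
    and "\<And>U. is_dens_maximizer indep N lam U \<Longrightarrow> U \<subseteq> Dset indep N lam"
proof -
  define Fm where "Fm = {U. is_dens_maximizer indep N lam U}"
  have fN: "finite N" using assms unfolding matroid_def by auto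
  have Fsub: "Fm \<subseteq> Pow N" unfolding Fm_def is_dens_maximizer_def by auto
  have fF: "finite Fm" using Fsub fN by (meson finite_Pow_iff finite_subset)
  have "Max (dens_obj indep lam ` Pow N) \<in> dens_obj indep lam ` Pow N" using fN by (intro Max_in) auto
  then obtain U0 where U0: "U0 \<in> Pow N" "dens_obj indep lam U0 = Max (dens_obj indep lam ` Pow N)" by auto
  have "is_dens_maximizer indep N lam U0" unfolding is_dens_maximizer_def
  proof (intro conjI allI impI)
    show "U0 \<subseteq> N" using U0 by auto
    fix V assume "V \<subseteq> N"
    then show "dens_obj indep lam V \<le> dens_obj indep lam U0" unfolding U0(2) using fN by (intro Max_ge) auto
  qed
  then have neF: "Fm \<noteq> {}" unfolding Fm_def by auto
  have uni: "\<And>G. finite G \<Longrightarrow> G \<noteq> {} \<Longrightarrow> G \<subseteq> Fm \<Longrightarrow> is_dens_maximizer indep N lam (\<Union>G)"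
  proof -
    fix G :: "'a set set" assume "finite G" "G \<noteq> {}" "G \<subseteq> Fm"
    then show "is_dens_maximizer indep N lam (\<Union>G)"
    proof (induction G rule: finite_ne_induct)
      case (singleton x) then show ?case unfolding Fm_def by auto
    next
      case (insert x G)
      then have "is_dens_maximizer indep N lam x" "is_dens_maximizer indep N lam (\<Union>G)" unfolding Fm_def by auto
      then show ?case using maximizer_union[OF assms] by simp
    qed
  qed
  have D: "is_dens_maximizer indep N lam (\<Union>Fm)" using uni[OF fF neF] by simp
  have DU: "\<And>U. is_dens_maximizer indep N lam U \<Longrightarrow> U \<subseteq> \<Union>Fm" unfolding Fm_def by auto
  have "Dset indep N lam = \<Union>Fm"
    unfolding Dset_def
  proof (rule the_equality)
    show "is_dens_maximizer indep N lam (\<Union>Fm) \<and> (\<forall>V. is_dens_maximizer indep N lam V \<and> \<Union>Fm \<subseteq> V \<longrightarrow> V = \<Union>Fm)"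
      using D DU by blast
    fix U assume "is_dens_maximizer indep N lam U \<and> (\<forall>V. is_dens_maximizer indep N lam V \<and> U \<subseteq> V \<longrightarrow> V = U)"
    then show "U = \<Union>Fm" using D DU by blast
  qed
  then show "is_dens_maximizer indep N lam (Dset indep N lam)"
    and "\<And>U. is_dens_maximizer indep N lam U \<Longrightarrow> U \<subseteq> Dset indep N lam" using D DU by auto
qed


lemma rho_bounds:
  assumes M: "matroid N indep" and L: "loopless N indep"
  shows "0 \<le> rank_density N indep t \<and> rank_density N indep t \<le> real (card N)"
proof (cases "0 < t \<and> t \<le> real (matroid_rank N indep)")
  case False
  then have "rank_density N indep t = 0" unfolding rank_density_def by auto
  then show ?thesis by simp
next
  case True
  define S where "S = {lam. lam \<ge> 0 \<and> real (mrank indep (Dset indep N lam)) \<ge> t}"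
  have fN: "finite N" using mat_fin[OF M] .
  have me: "mrank indep {} = 0" using mrank_empty[OF M] .
  have "is_dens_maximizer indep N 0 N" unfolding is_dens_maximizer_def dens_obj_def
    using fN card_mono by auto
  then have "N \<subseteq> Dset indep N 0" using Dset_char(2)[OF M, of 0] by simp
  moreover have "Dset indep N 0 \<subseteq> N" using Dset_char(1)[OF M, of 0] unfolding is_dens_maximizer_def by simp
  ultimately have "Dset indep N 0 = N" by blast
  then have S0: "0 \<in> S" unfolding S_def using True unfolding matroid_rank_def by simp
  have Sb: "lam \<le> real (card N)" if "lam \<in> S" for lam
  proof (rule ccontr)
    assume "\<not> lam \<le> real (card N)"
    then have lg: "lam > real (card N)" by simp
    define D where "D = Dset indep N lam"
    have l0: "lam \<ge> 0" using that unfolding S_def by simp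
    have Dm: "is_dens_maximizer indep N lam D" unfolding D_def using Dset_char(1)[OF M l0] .
    have tD: "real (mrank indep D) \<ge> t" using that unfolding S_def D_def by simp
    show False
    proof (cases "D = {}")
      case True then show False using tD me \<open>0 < t \<and> _\<close> by simp
    next
      case False
      then obtain e where e: "e \<in> D" by blast
      have DN: "D \<subseteq> N" using Dm unfolding is_dens_maximizer_def by simp
      then have "indep {e}" using L e unfolding loopless_def by blast
      then have "card {e} \<le> mrank indep D" using mrank_ge[OF M, of "{e}" D] e by simp
      then have r1: "real (mrank indep D) \<ge> 1" by simp
      have "real (card D) \<le> real (card N)" using DN fN card_mono by simp
      moreover have "lam * 1 \<le> lam * real (mrank indep D)" using r1 l0 by (intro mult_left_mono) auto
      moreover have "dens_obj indep lam D = real (card D) - lam * real (mrank indep D)" by (simp add: dens_obj_def)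
      ultimately have "dens_obj indep lam D < 0" using lg by linarith
      moreover have "dens_obj indep lam {} \<le> dens_obj indep lam D" using Dm unfolding is_dens_maximizer_def by simp
      ultimately show False unfolding dens_obj_def using me by simp
    qed
  qed
  define C where "C U = {lam. 0 \<le> lam} \<inter> (\<Inter>V\<in>Pow N. {lam. dens_obj indep lam V \<le> dens_obj indep lam U})" for U
  have SC: "S = (\<Union>U\<in>{U\<in>Pow N. t \<le> real (mrank indep U)}. C U)"
  proof (intro equalityI subsetI)
    fix lam assume "lam \<in> S"
    then have l0: "lam \<ge> 0" and tD: "t \<le> real (mrank indep (Dset indep N lam))" unfolding S_def by auto
    have Dm: "is_dens_maximizer indep N lam (Dset indep N lam)" using Dset_char(1)[OF M l0] .
    then have "lam \<in> C (Dset indep N lam)" "Dset indep N lam \<in> Pow N"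
      unfolding C_def is_dens_maximizer_def using l0 by auto
    then show "lam \<in> (\<Union>U\<in>{U\<in>Pow N. t \<le> real (mrank indep U)}. C U)" using tD by blast
  next
    fix lam assume "lam \<in> (\<Union>U\<in>{U\<in>Pow N. t \<le> real (mrank indep U)}. C U)"
    then obtain U where U: "U \<subseteq> N" "t \<le> real (mrank indep U)" "lam \<in> C U" by auto
    then have l0: "lam \<ge> 0" unfolding C_def by simp
    have "is_dens_maximizer indep N lam U" unfolding is_dens_maximizer_def using U unfolding C_def by auto
    then have "U \<subseteq> Dset indep N lam" using Dset_char(2)[OF M l0] by simp
    then have "mrank indep U \<le> mrank indep (Dset indep N lam)" using mrank_mono[OF M] by simp
    then show "lam \<in> S" unfolding S_def using U l0 by simp
  qed
  have cC: "closed (C U)" for U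
    unfolding C_def dens_obj_def
    by (intro closed_Int closed_INT ballI closed_Collect_le continuous_intros)
  have fin: "finite {U\<in>Pow N. t \<le> real (mrank indep U)}" using fN by simp
  have cS: "closed S" unfolding SC using fin cC by (intro closed_UN) auto
  have bS: "bdd_above S" using Sb unfolding bdd_above_def by blast
  have SupS: "Sup S \<in> S" using closed_contains_Sup[OF _ bS cS] S0 by blast
  have G: "(GREATEST lam. lam \<ge> 0 \<and> real (mrank indep (Dset indep N lam)) \<ge> t) = Sup S"
  proof (rule Greatest_equality)
    show "Sup S \<ge> 0 \<and> real (mrank indep (Dset indep N (Sup S))) \<ge> t" using SupS unfolding S_def by simp
    fix y assume "y \<ge> 0 \<and> real (mrank indep (Dset indep N y)) \<ge> t"
    then have "y \<in> S" unfolding S_def by simp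
    then show "y \<le> Sup S" using bS by (intro cSup_upper)
  qed
  have "rank_density N indep t = Sup S" unfolding rank_density_def using True G by simp
  then show ?thesis using SupS Sb[OF SupS] unfolding S_def by simp
qed



theorem lemma3p4:
  fixes n :: nat and w :: "nat \<Rightarrow> real" and N :: "'a set" and indep :: "'a set \<Rightarrow> bool"
    and \<alpha> \<beta> :: real and rho' :: "real \<Rightarrow> real"
  assumes "n \<ge> 1"
    and "\<forall>i\<in>{1..n}. w i \<ge> 0"
    and "matroid N indep" and "loopless N indep" and "card N \<le> n"
    and "\<alpha> \<ge> 1" and "\<beta> \<ge> 1"
    and "is_approx \<alpha> \<beta> (rank_density N indep) rho'"
  shows "Ffun n w (rank_density N indep)
           \<le> ennreal (2 * \<alpha> * \<beta>) * Ffun n w rho' + ennreal (\<alpha> * Max (w ` {1..n}))"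
proof -
  note n1 = assms(1) and wpos = assms(2)
  define \<rho> where "\<rho> = rank_density N indep"
  define W where "W = Max (w ` {1..n})"
  have W0: "0 \<le> W"
  proof -
    have "w 1 \<le> W" unfolding W_def using n1 by (intro Max_ge) auto
    moreover have "0 \<le> w 1" using wpos n1 by simp
    ultimately show ?thesis by linarith
  qed
  have rb: "0 \<le> \<rho> t" "\<rho> t \<le> real n" for t
    using rho_bounds[OF assms(3,4), of t] assms(5) unfolding \<rho>_def by auto
  have ap: "\<And>t. 0 < t \<Longrightarrow> rho' t \<ge> 0"
    "\<And>s t. 0 < s \<Longrightarrow> s \<le> t \<Longrightarrow> rho' t \<le> rho' s"
    "\<And>t. 0 < t \<Longrightarrow> downshift \<alpha> \<beta> \<rho> t \<le> rho' t \<and> rho' t \<le> \<rho> t"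
    using assms(8) unfolding is_approx_def \<rho>_def by auto
  have rb': "0 \<le> rho' s" "rho' s \<le> real n" if "0 < s" for s
    using ap(1)[OF that] ap(3)[OF that] rb[of s] by auto
  define h where "h s = eta n w (rho' (max s 1))" for s
  define H where "H s = ennreal (h s) * indicator {1<..} s" for s
  have "mono (\<lambda>s. - h s)"
  proof (rule monoI)
    fix x y :: real assume "x \<le> y"
    have "rho' (max y 1) \<le> rho' (max x 1)" using \<open>x \<le> y\<close> by (intro ap(2)) auto
    then have "h y \<le> h x" unfolding h_def using rb'[of "max y 1"] rb'[of "max x 1"]
      by (intro eta_mono wpos n1) auto
    then show "- h x \<le> - h y" by simp
  qed
  then have "(\<lambda>s. - h s) \<in> borel_measurable borel" by (rule borel_measurable_mono)
  then have "(\<lambda>s. - (- h s)) \<in> borel_measurable borel" by measurable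
  then have hm[measurable]: "h \<in> borel_measurable borel" by simp
  have Hm[measurable]: "H \<in> borel_measurable borel" unfolding H_def by measurable
  have Ham: "(\<lambda>t. H (t / \<alpha>)) \<in> borel_measurable borel" by measurable
  have pw: "ennreal (eta n w (\<rho> t)) * indicator {0<..} t
      \<le> ennreal W * indicator {0<..\<alpha>} t + ennreal (2 * \<beta>) * H (t / \<alpha>)" for t
  proof (cases "0 < t")
    case False then show ?thesis by simp
  next
    case tp: True
    show ?thesis
    proof (cases "t \<le> \<alpha>")
      case True
      have "eta n w (\<rho> t) \<le> W" unfolding W_def using eta_bounds(2)[OF rb wpos n1] .
      then have "ennreal (eta n w (\<rho> t)) \<le> ennreal W" by (rule ennreal_leI)
      then have "ennreal (eta n w (\<rho> t)) \<le> ennreal W + ennreal (2 * \<beta>) * H (t / \<alpha>)"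
        by (intro add_increasing2) simp_all
      then show ?thesis using tp True by simp
    next
      case False
      define s where "s = t / \<alpha>"
      have s1: "s > 1" "0 < s" using False assms(6) unfolding s_def by (auto simp: less_divide_eq)
      have ts: "\<alpha> * s = t" unfolding s_def using assms(6) by simp
      define a where "a = \<rho> t"
      define d where "d = (if 0 < a / \<beta> \<and> a / \<beta> < 1 then 1 else a / \<beta>)"
      have dd: "downshift \<alpha> \<beta> \<rho> s = d" unfolding downshift_def downshift_phi_def d_def a_def Let_def
        using s1 ts by simp
      have k: "eta n w a \<le> 2 * \<beta> * eta n w d" unfolding d_def a_def
        using eta_key[OF rb wpos n1 assms(7)] .
      have d0: "0 \<le> d" unfolding d_def a_def using rb[of t] assms(7) by auto
      have "d \<le> rho' s" using ap(3)[OF s1(2)] dd by simp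
      then have "eta n w d \<le> eta n w (rho' s)" using d0 rb'[OF s1(2)] by (intro eta_mono wpos n1) auto
      then have "eta n w a \<le> 2 * \<beta> * eta n w (rho' s)" using k assms(7) by (smt (verit) mult_left_mono)
      moreover have "H s = ennreal (eta n w (rho' s))" unfolding H_def h_def using s1 by simp
      moreover have "0 \<le> eta n w (rho' s)" using eta_bounds(1)[OF rb'[OF s1(2)] wpos n1] .
      ultimately have "ennreal (eta n w (\<rho> t)) \<le> ennreal (2 * \<beta>) * H (t / \<alpha>)"
        unfolding a_def s_def using assms(7) by (simp add: ennreal_mult[symmetric] ennreal_leI)
      then show ?thesis using tp by (simp add: add_increasing)
    qed
  qed
  have "Ffun n w \<rho> = (\<integral>\<^sup>+ t. ennreal (eta n w (\<rho> t)) * indicator {0<..} t \<partial>lborel)"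
    unfolding Ffun_def by simp
  also have "\<dots> \<le> (\<integral>\<^sup>+ t. ennreal W * indicator {0<..\<alpha>} t + ennreal (2 * \<beta>) * H (t / \<alpha>) \<partial>lborel)"
    by (intro nn_integral_mono pw)
  also have "\<dots> = ennreal W * (\<integral>\<^sup>+ t. indicator {0<..\<alpha>} t \<partial>lborel) + ennreal (2 * \<beta>) * (\<integral>\<^sup>+ t. H (t / \<alpha>) \<partial>lborel)"
    by (subst nn_integral_add) (auto simp: nn_integral_cmult Ham)
  also have "(\<integral>\<^sup>+ t. indicator {0<..\<alpha>} t \<partial>lborel) = ennreal \<alpha>"
    using assms(6) by simp
  also have "(\<integral>\<^sup>+ t. H (t / \<alpha>) \<partial>lborel) = ennreal \<alpha> * (\<integral>\<^sup>+ x. H x \<partial>lborel)"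
  proof -
    have "(\<integral>\<^sup>+ t. H (t / \<alpha>) \<partial>lborel) = ennreal \<bar>\<alpha>\<bar> * (\<integral>\<^sup>+ x. H ((0 + \<alpha> * x) / \<alpha>) \<partial>lborel)"
      using assms(6) by (intro nn_integral_real_affine Ham) auto
    then show ?thesis using assms(6) by simp
  qed
  finally have I1: "Ffun n w \<rho> \<le> ennreal W * ennreal \<alpha> + ennreal (2 * \<beta>) * (ennreal \<alpha> * (\<integral>\<^sup>+ x. H x \<partial>lborel))" .
  have I2: "(\<integral>\<^sup>+ x. H x \<partial>lborel) \<le> Ffun n w rho'"
    unfolding Ffun_def
  proof (intro nn_integral_mono)
    fix x :: real
    show "H x \<le> ennreal (eta n w (rho' x)) * indicator {0<..} x"
      unfolding H_def h_def by (cases "1 < x") auto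
  qed
  have "Ffun n w \<rho> \<le> ennreal W * ennreal \<alpha> + ennreal (2 * \<beta>) * (ennreal \<alpha> * Ffun n w rho')"
    using I1 I2 by (meson add_left_mono mult_left_mono order_trans zero_le)
  also have "ennreal W * ennreal \<alpha> = ennreal (\<alpha> * W)"
    using W0 assms(6) by (simp add: ennreal_mult mult.commute)
  also have "ennreal (2 * \<beta>) * (ennreal \<alpha> * Ffun n w rho') = ennreal (2 * \<alpha> * \<beta>) * Ffun n w rho'"
  proof -
    have "ennreal (2 * \<alpha> * \<beta>) = ennreal (2 * \<beta>) * ennreal \<alpha>"
      using assms(6,7) by (simp add: ennreal_mult[symmetric] mult.commute mult.left_commute)
    then show ?thesis by (simp add: mult.assoc)
  qed
  finally have "Ffun n w \<rho> \<le> ennreal (2 * \<alpha> * \<beta>) * Ffun n w rho' + ennreal (\<alpha> * W)"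
    by (simp add: add.commute)
  then show ?thesis unfolding \<rho>_def W_def .
qed

end
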